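(* Consider the multi-hop control network closed loop of the context with plant, graphs, scheduling, integers $n,r,m,s$, step amplitude $A$ and bounds $\bar O_y,\bar O_u\ge 0$ fixed. Restricted to parameter choices $(\mathbf c,\mathbf d,\mathbf w_R,\mathbf w_O)$ satisfying the deadbeat identity $D_CD_{P'}+N_{C'}N_{G_R}N_PN_{G_O}=z^{l}$ with $l=m+r+1$, each of the constraints $O_y\le\bar O_y$ and $O_u\le\bar O_u$ is equivalent to a finite system of polynomial inequalities in the entries of $\mathbf d$ and $\mathbf w_R$ (with coefficients depending only on the fixed data).
   Context: Plant: $P(z)=\dfrac{N_P(z)}{M(z)D_{P'}(z)}$ with $N_P(z)=b_{n-1}z^{n-1}+\dots+b_0$, $D_{P'}(z)=z^r+a_{r-1}z^{r-1}+\dots+a_0$, $M(z)$ a monic polynomial, $r+\deg M=n$. Controllability network: acyclic directed graph $(V_R,E_R)$ with controller node $v_c$ and actuator node $v_u$, weights $W_R:E_R\to\mathbb R$, and a fixed scheduling assigning to each directed path $\rho$ from $v_c$ to $v_u$ a delay $d(\rho)\in\mathbb N$; $\chi_R(d)$ is the set of paths of delay $d$, $D_R$ the finite set of occurring delays, $\bar D_R=\max D_R$, $W_R(\rho)$ the product of the weights on $\rho$, $\gamma_R(d)=\sum_{\rho\in\chi_R(d)}W_R(\rho)$, $N_{G_R}(z)=\sum_{d\in D_R}\gamma_R(d)z^{\bar D_R-d}$, $G_R(z)=N_{G_R}(z)/z^{\bar D_R}$. Observability network analogously (weights $W_O$, delays $D_O$, $\bar D_O=\max D_O$, $\gamma_O$,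 $N_{G_O}(z)=\sum_{d\in D_O}\gamma_O(d)z^{\bar D_O-d}$, $G_O(z)=N_{G_O}(z)/z^{\bar D_O}$). Controller $C(z)=M(z)z^{\bar D_R}z^{\bar D_O}\,N_{C'}(z)/D_C(z)$ with $N_{C'}(z)=d_sz^s+\dots+d_0$, $D_C(z)=(z-1)(z^m+c_{m-1}z^{m-1}+\dots+c_0)$, $m+1=s+\deg M+\bar D_R+\bar D_O$; $\mathbf c=(c_{m-1},\dots,c_0)$, $\mathbf d=(d_s,\dots,d_0)$, $\mathbf w_R=(W_R(e))_{e\in E_R}$, $\mathbf w_O=(W_O(e))_{e\in E_O}$. With step reference $r(k)=A$, $k\ge0$ ($R(z)=Az/(z-1)$), the plant output and plant input have Z-transforms $Y(z)=\frac{CG_RP}{1+CG_RPG_O}R(z)$ and $U(z)=\frac{CG_R}{1+CG_RPG_O}R(z)$; the error is $e(k)=y(k)-r(k)$. Overshoots: $O_y=\sup_{k\ge0}|e(k)|$ and $O_u=\sup_{k\ge0}|u(k)|$. *)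

theory Defs
  imports "HOL-Computational_Algebra.Computational_Algebra"
                    "HOL-Library.Extended_Real"
begin

inductive_set polyfun :: "(('x \<Rightarrow> real) \<Rightarrow> real) set" where
  pf_const: "(\<lambda>_. c) \<in> polyfun"
| pf_var: "(\<lambda>x. x i) \<in> polyfun"
| pf_add: "p \<in> polyfun \<Longrightarrow> q \<in> polyfun \<Longrightarrow> (\<lambda>x. p x + q x) \<in> polyfun"
| pf_mult: "p \<in> polyfun \<Longrightarrow> q \<in> polyfun \<Longrightarrow> (\<lambda>x. p x * q x) \<in> polyfun"

definition dpath :: "('v \<times> 'v) set \<Rightarrow> 'v \<Rightarrow> 'v \<Rightarrow> 'v list \<Rightarrow> bool" where
  "dpath E u v \<rho> \<longleftrightarrow> \<rho> \<noteq> [] \<and> hd \<rho> = u \<and> last \<rho> = v \<and>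
     (\<forall>i. Suc i < length \<rho> \<longrightarrow> (\<rho> ! i, \<rho> ! Suc i) \<in> E)"

definition paths :: "('v \<times> 'v) set \<Rightarrow> 'v \<Rightarrow> 'v \<Rightarrow> 'v list set" where
  "paths E u v = {\<rho>. dpath E u v \<rho>}"

definition pweight :: "('v \<times> 'v \<Rightarrow> real) \<Rightarrow> 'v list \<Rightarrow> real" where
  "pweight W \<rho> = (\<Prod>i<length \<rho> - 1. W (\<rho> ! i, \<rho> ! Suc i))"

definition chi :: "('v \<times> 'v) set \<Rightarrow> 'v \<Rightarrow> 'v \<Rightarrow> ('v list \<Rightarrow> nat) \<Rightarrow> nat \<Rightarrow> 'v list set" where
  "chi E u v dl d = {\<rho> \<in> paths E u v. dl \<rho> = d}"

definition delays :: "('v \<times> 'v) set \<Rightarrow> 'v \<Rightarrow> 'v \<Rightarrow> ('v list \<Rightarrow> nat) \<Rightarrow> nat set" where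
  "delays E u v dl = dl ` paths E u v"

definition maxdelay :: "('v \<times> 'v) set \<Rightarrow> 'v \<Rightarrow> 'v \<Rightarrow> ('v list \<Rightarrow> nat) \<Rightarrow> nat" where
  "maxdelay E u v dl = Max (delays E u v dl)"

definition gam :: "('v \<times> 'v) set \<Rightarrow> 'v \<Rightarrow> 'v \<Rightarrow> ('v list \<Rightarrow> nat) \<Rightarrow> ('v \<times> 'v \<Rightarrow> real)
    \<Rightarrow> nat \<Rightarrow> real" where
  "gam E u v dl W d = (\<Sum>\<rho>\<in>chi E u v dl d. pweight W \<rho>)"

definition netnum :: "('v \<times> 'v) set \<Rightarrow> 'v \<Rightarrow> 'v \<Rightarrow> ('v list \<Rightarrow> nat) \<Rightarrow> ('v \<times> 'v \<Rightarrow> real)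
    \<Rightarrow> real poly" where
  "netnum E u v dl W = (\<Sum>d\<in>delays E u v dl. monom (gam E u v dl W d) (maxdelay E u v dl - d))"

type_synonym ratfun = "real poly fract"

definition rf :: "real poly \<Rightarrow> ratfun" where
  "rf p = Fract p 1"

definition netG :: "('v \<times> 'v) set \<Rightarrow> 'v \<Rightarrow> 'v \<Rightarrow> ('v list \<Rightarrow> nat) \<Rightarrow> ('v \<times> 'v \<Rightarrow> real)
    \<Rightarrow> ratfun" where
  "netG E u v dl W = rf (netnum E u v dl W) / rf (monom 1 (maxdelay E u v dl))"

text \<open>Causal inverse Z-transform of a proper rational function F(z) = p(z)/q(z)
  (any representation with q nonzero and N = deg q >= deg p; the result does
  not depend on the representation): with x = 1/z,
  F = (x^N p(1/x)) / (x^N q(1/x)), a quotient of polynomials in x whose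
  denominator has nonzero constant term, and f(k) is the coefficient of x^k
  of its power series expansion, i.e. F(z) = sum_k f(k) z^(-k).\<close>
definition ztrans_rep :: "real poly \<Rightarrow> real poly \<Rightarrow> nat \<Rightarrow> real" where
  "ztrans_rep p q k =
     fps_nth (fps_of_poly (reflect_poly p * monom 1 (degree q - degree p)) / fps_of_poly (reflect_poly q)) k"

definition inv_ztrans :: "ratfun \<Rightarrow> nat \<Rightarrow> real" where
  "inv_ztrans F = (SOME f. \<exists>p q. q \<noteq> 0 \<and> degree p \<le> degree q \<and> F = Fract p q \<and> f = ztrans_rep p q)"

definition plantP :: "real poly \<Rightarrow> real poly \<Rightarrow> real poly \<Rightarrow> ratfun" where
  "plantP NP M DP' = rf NP / rf (M * DP')"

definition ctrlC :: "real poly \<Rightarrow> nat \<Rightarrow> nat \<Rightarrow> real poly \<Rightarrow> real poly \<Rightarrow> ratfun" where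
  "ctrlC M DR DO NC Dc = rf (M * monom 1 DR * monom 1 DO * NC) / rf ([:-1, 1:] * Dc)"

definition stepR :: "real \<Rightarrow> ratfun" where
  "stepR A = rf [:0, A:] / rf [:-1, 1:]"

definition Yz :: "ratfun \<Rightarrow> ratfun \<Rightarrow> ratfun \<Rightarrow> ratfun \<Rightarrow> ratfun \<Rightarrow> ratfun" where
  "Yz C GR P GO R = C * GR * P / (1 + C * GR * P * GO) * R"

definition Uz :: "ratfun \<Rightarrow> ratfun \<Rightarrow> ratfun \<Rightarrow> ratfun \<Rightarrow> ratfun \<Rightarrow> ratfun" where
  "Uz C GR P GO R = C * GR / (1 + C * GR * P * GO) * R"

definition overshoot_y :: "ratfun \<Rightarrow> real \<Rightarrow> ereal" where
  "overshoot_y Y A = (SUP k. ereal \<bar>inv_ztrans Y k - A\<bar>)"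

definition overshoot_u :: "ratfun \<Rightarrow> ereal" where
  "overshoot_u U = (SUP k. ereal \<bar>inv_ztrans U k\<bar>)"

end

theory Submission
  imports Defs
begin



definition rr :: "nat \<Rightarrow> real poly \<Rightarrow> real poly" where
  "rr N p = reflect_poly p * monom 1 (N - degree p)"

lemma coeff_rr: "degree p \<le> N \<Longrightarrow> coeff (rr N p) i = (if i \<le> N then coeff p (N - i) else 0)"
  unfolding rr_def mult.commute[of "reflect_poly p"]
  by (auto simp: coeff_monom_mult coeff_reflect_poly coeff_eq_0 not_le)

lemma rr_mult: assumes "degree p \<le> N" "degree q \<le> N'"
  shows "rr (N+N') (p*q) = rr N p * rr N' q"
proof (cases "p = 0 \<or> q = 0")
  case True then show ?thesis by (auto simp: rr_def)
next
  case False
  then have d: "degree (p*q) = degree p + degree q" by (simp add: degree_mult_eq)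
  have "monom (1::real) (N + N' - degree (p*q)) = monom 1 (N - degree p) * monom 1 (N' - degree q)"
    using assms d by (simp add: mult_monom)
  then show ?thesis unfolding rr_def reflect_poly_mult by (simp add: ac_simps)
qed

lemma ztrans_rep_rr: "ztrans_rep p q = (\<lambda>k. (fps_of_poly (rr (degree q) p) / fps_of_poly (rr (degree q) q)) $ k)"
  unfolding ztrans_rep_def rr_def by (simp add: fun_eq_iff)

lemma ztrans_indep:
  assumes q: "q \<noteq> 0" "q' \<noteq> 0" and dp: "degree p \<le> degree q" "degree p' \<le> degree q'"
    and e: "p * q' = p' * q"
  shows "ztrans_rep p q = ztrans_rep p' q'"
proof -
  define a where "a = fps_of_poly (rr (degree q) p)"
  define a' where "a' = fps_of_poly (rr (degree q') p')"
  define b where "b = fps_of_poly (rr (degree q) q)"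
  define b' where "b' = fps_of_poly (rr (degree q') q')"
  have b0: "b $ 0 \<noteq> 0" "b' $ 0 \<noteq> 0" using q by (simp_all add: b_def b'_def rr_def)
  have "rr (degree q + degree q') (p*q') = rr (degree q + degree q') (p'*q)" using e by simp
  then have "rr (degree q) p * rr (degree q') q' = rr (degree q') p' * rr (degree q) q"
    using rr_mult[of p "degree q" q' "degree q'"] rr_mult[of p' "degree q'" q "degree q"] dp
    by (simp add: add.commute)
  then have E: "a * b' = a' * b" unfolding a_def a'_def b_def b'_def by (simp flip: fps_of_poly_mult)
  have "a / b = a * inverse b" "a' / b' = a' * inverse b'" using b0 by (simp_all add: fps_divide_unit)
  moreover have "a * inverse b = a' * inverse b'"
  proof -
    have "a * inverse b = a * b' * inverse b' * inverse b" using b0 inverse_mult_eq_1'[of b']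
      by (simp add: ac_simps)
    also have "\<dots> = a' * b * inverse b * inverse b'" using E by (simp add: ac_simps)
    also have "\<dots> = a' * inverse b'" using b0 inverse_mult_eq_1'[of b] by (simp add: ac_simps)
    finally show ?thesis .
  qed
  ultimately show ?thesis unfolding ztrans_rep_rr a_def a'_def b_def b'_def by simp
qed

lemma inv_ztrans_Fract:
  assumes "q \<noteq> 0" "degree p \<le> degree q"
  shows "inv_ztrans (Fract p q) = ztrans_rep p q"
proof -
  have ex: "\<exists>p' q'. q' \<noteq> 0 \<and> degree p' \<le> degree q' \<and> Fract p q = Fract p' q' \<and> ztrans_rep p q = ztrans_rep p' q'"
    using assms by blast
  show ?thesis unfolding inv_ztrans_def
  proof (rule some_equality)
    fix f assume "\<exists>p' q'. q' \<noteq> 0 \<and> degree p' \<le> degree q' \<and> Fract p q = Fract p' q' \<and> f = ztrans_rep p' q'"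
    then obtain p' q' where "q' \<noteq> 0" "degree p' \<le> degree q'" "Fract p q = Fract p' q'" "f = ztrans_rep p' q'"
      by blast
    then show "f = ztrans_rep p q" using ztrans_indep[of q q' p p'] assms by (simp add: eq_fract)
  qed (use ex in metis)
qed

lemma ztrans_step:
  assumes "degree p \<le> Suc l"
  shows "ztrans_rep p (monom 1 l * [:-1,1:]) k = (\<Sum>i\<le>min k (Suc l). coeff p (Suc l-i))"
proof -
  let ?q = "monom 1 l * [:-1,1:] :: real poly"
  have dq: "degree ?q = l + 1" by (subst degree_mult_eq) (auto simp: degree_monom_eq)
  have r1: "reflect_poly (monom (1::real) l) = 1"
    by (auto simp: poly_eq_iff coeff_reflect_poly degree_monom_eq coeff_monom)
  have r2: "reflect_poly [:-1,1::real:] = [:1,-1:]"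
    by (subst reflect_poly_pCons) simp_all
  have rq: "rr (l+1) ?q = [:1,-1:]" unfolding rr_def dq reflect_poly_mult r1 r2 by simp
  have fq: "fps_of_poly [:1,-1::real:] = 1 - fps_X"
    by (simp add: fps_eq_iff coeff_pCons split: nat.split)
  have inv: "inverse (1 - fps_X :: real fps) = Abs_fps (\<lambda>n. 1)"
    using fps_inverse_idempotent[of "Abs_fps (\<lambda>n. 1::real)"] by (simp add: fps_inverse_gp')
  have "ztrans_rep p ?q k = (fps_of_poly (rr (l+1) p) * Abs_fps (\<lambda>n. 1)) $ k"
    unfolding ztrans_rep_rr dq rq fq by (simp add: fps_divide_unit inv)
  also have "\<dots> = (\<Sum>i=0..k. coeff (rr (l+1) p) i)" by (simp add: fps_mult_nth)
  also have "\<dots> = (\<Sum>i=0..k. if i \<le> Suc l then coeff p (Suc l-i) else 0)" using assms by (simp add: coeff_rr)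
  also have "\<dots> = (\<Sum>i\<le>min k (Suc l). coeff p (Suc l-i))"
    by (rule sum.mono_neutral_cong_right) auto
  finally show ?thesis .
qed



lemma pf_sum: "(\<And>i. i \<in> S \<Longrightarrow> f i \<in> polyfun) \<Longrightarrow> (\<lambda>x. \<Sum>i\<in>S. f i x) \<in> polyfun"
proof (cases "finite S")
  case True
  assume h: "\<And>i. i \<in> S \<Longrightarrow> f i \<in> polyfun"
  from True h show ?thesis
  proof (induction S rule: finite_induct)
    case empty then show ?case using polyfun.pf_const[of 0] by simp
  next
    case (insert a F) then show ?case using polyfun.pf_add[of "f a" "\<lambda>x. \<Sum>i\<in>F. f i x"] by simp
  qed
next
  case False then show ?thesis using polyfun.pf_const[of 0] by simp
qed

lemma pf_prod: "(\<And>i. i \<in> S \<Longrightarrow> f i \<in> polyfun) \<Longrightarrow> (\<lambda>x. \<Prod>i\<in>S. f i x) \<in> polyfun"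
proof (cases "finite S")
  case True
  assume h: "\<And>i. i \<in> S \<Longrightarrow> f i \<in> polyfun"
  from True h show ?thesis
  proof (induction S rule: finite_induct)
    case empty then show ?case using polyfun.pf_const[of 1] by simp
  next
    case (insert a F) then show ?case using polyfun.pf_mult[of "f a" "\<lambda>x. \<Prod>i\<in>F. f i x"] by simp
  qed
next
  case False then show ?thesis using polyfun.pf_const[of 1] by simp
qed

lemma pf_diff: "p \<in> polyfun \<Longrightarrow> q \<in> polyfun \<Longrightarrow> (\<lambda>x. p x - q x) \<in> polyfun"
proof -
  assume "p \<in> polyfun" "q \<in> polyfun"
  then have "(\<lambda>x. p x + (\<lambda>_. -1) x * q x) \<in> polyfun"
    by (intro polyfun.pf_add polyfun.pf_mult polyfun.pf_const)
  then show ?thesis by simp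
qed

definition PP :: "(('x \<Rightarrow> real) \<Rightarrow> real poly) set" where
  "PP = {P. \<forall>j. (\<lambda>v. coeff (P v) j) \<in> polyfun}"

lemma PP_const: "(\<lambda>_. p) \<in> PP"
  unfolding PP_def by (auto intro: polyfun.pf_const)

lemma PP_add: "P \<in> PP \<Longrightarrow> Q \<in> PP \<Longrightarrow> (\<lambda>v. P v + Q v) \<in> PP"
  unfolding PP_def by (auto intro: polyfun.pf_add)

lemma PP_mult: assumes "P \<in> PP" "Q \<in> PP" shows "(\<lambda>v. P v * Q v) \<in> PP"
  unfolding PP_def
proof (intro CollectI allI)
  fix j
  have "(\<lambda>v. \<Sum>i\<le>j. coeff (P v) i * coeff (Q v) (j - i)) \<in> polyfun"
    using assms unfolding PP_def by (auto intro!: pf_sum polyfun.pf_mult)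
  then show "(\<lambda>v. coeff (P v * Q v) j) \<in> polyfun" by (simp add: coeff_mult)
qed

lemma PP_sum: "(\<And>i. i \<in> S \<Longrightarrow> P i \<in> PP) \<Longrightarrow> (\<lambda>v. \<Sum>i\<in>S. P i v) \<in> PP"
  unfolding PP_def
proof (intro CollectI allI)
  fix j assume "\<And>i. i \<in> S \<Longrightarrow> P i \<in> {P. \<forall>j. (\<lambda>v. coeff (P v) j) \<in> polyfun}"
  then have "(\<lambda>v. \<Sum>i\<in>S. coeff (P i v) j) \<in> polyfun" by (auto intro!: pf_sum)
  then show "(\<lambda>v. coeff (\<Sum>i\<in>S. P i v) j) \<in> polyfun" by (simp add: coeff_sum)
qed

lemma PP_monom: assumes c: "c \<in> polyfun" shows "(\<lambda>v. monom (c v) k) \<in> PP"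
  unfolding PP_def
proof (intro CollectI allI)
  fix j
  show "(\<lambda>v. coeff (monom (c v) k) j) \<in> polyfun"
    by (cases "k = j") (simp_all add: c polyfun.pf_const coeff_monom)
qed

lemma ps_exists:
  assumes "P \<in> PP"
  shows "\<exists>ps. finite ps \<and> ps \<subseteq> polyfun \<and>
     (\<forall>v. (\<forall>k\<le>N. \<bar>(\<Sum>i\<le>k. coeff (P v) (N - i)) - B\<bar> \<le> Ob) \<longleftrightarrow> (\<forall>p\<in>ps. 0 \<le> p v))"
proof -
  define Y where "Y k v = (\<Sum>i\<le>k. coeff (P v) (N - i))" for k v
  have Ypf: "Y k \<in> polyfun" for k
    unfolding Y_def[abs_def] using assms unfolding PP_def by (auto intro!: pf_sum)
  define ps where "ps = (\<lambda>k v. Ob - (Y k v - B)) ` {..N} \<union> (\<lambda>k v. Ob + (Y k v - B)) ` {..N}"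
  have "finite ps" unfolding ps_def by simp
  moreover have "ps \<subseteq> polyfun" unfolding ps_def
    using Ypf by (auto intro!: pf_diff polyfun.pf_add polyfun.pf_const)
  moreover have "(\<forall>k\<le>N. \<bar>Y k v - B\<bar> \<le> Ob) \<longleftrightarrow> (\<forall>p\<in>ps. 0 \<le> p v)" for v
  proof
    assume "\<forall>k\<le>N. \<bar>Y k v - B\<bar> \<le> Ob"
    then show "\<forall>p\<in>ps. 0 \<le> p v" unfolding ps_def by (auto simp: abs_le_iff)
  next
    assume h: "\<forall>p\<in>ps. 0 \<le> p v"
    show "\<forall>k\<le>N. \<bar>Y k v - B\<bar> \<le> Ob"
    proof (intro allI impI)
      fix k assume "k \<le> N"
      then have m: "(\<lambda>v. Ob - (Y k v - B)) \<in> ps" "(\<lambda>v. Ob + (Y k v - B)) \<in> ps"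
        unfolding ps_def by blast+
      have "0 \<le> Ob - (Y k v - B)" "0 \<le> Ob + (Y k v - B)"
        using h m by fastforce+
      then show "\<bar>Y k v - B\<bar> \<le> Ob" by (simp add: abs_le_iff)
    qed
  qed
  ultimately show ?thesis unfolding Y_def by blast
qed



lemma overshoot_char:
  assumes "degree p \<le> Suc l"
  shows "(SUP k. ereal \<bar>inv_ztrans (Fract p (monom 1 l * [:-1,1:])) k - B\<bar>) \<le> ereal Ob
     \<longleftrightarrow> (\<forall>k\<le>Suc l. \<bar>(\<Sum>i\<le>k. coeff p (Suc l - i)) - B\<bar> \<le> Ob)"
proof -
  let ?q = "monom 1 l * [:-1,1:] :: real poly"
  have dq: "degree ?q = Suc l" by (subst degree_mult_eq) (auto simp: degree_monom_eq)
  have q0: "?q \<noteq> 0"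
  proof
    assume "?q = 0" with dq show False by simp
  qed
  have iz: "inv_ztrans (Fract p ?q) k = (\<Sum>i\<le>min k (Suc l). coeff p (Suc l - i))" for k
    using inv_ztrans_Fract[OF q0] assms dq ztrans_step[OF assms] by simp
  have "(SUP k. ereal \<bar>inv_ztrans (Fract p ?q) k - B\<bar>) \<le> ereal Ob
     \<longleftrightarrow> (\<forall>k. \<bar>(\<Sum>i\<le>min k (Suc l). coeff p (Suc l - i)) - B\<bar> \<le> Ob)"
    unfolding SUP_le_iff iz by simp
  also have "\<dots> \<longleftrightarrow> (\<forall>k\<le>Suc l. \<bar>(\<Sum>i\<le>k. coeff p (Suc l - i)) - B\<bar> \<le> Ob)"
  proof
    assume h: "\<forall>k. \<bar>(\<Sum>i\<le>min k (Suc l). coeff p (Suc l - i)) - B\<bar> \<le> Ob"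
    show "\<forall>k\<le>Suc l. \<bar>(\<Sum>i\<le>k. coeff p (Suc l - i)) - B\<bar> \<le> Ob"
    proof (intro allI impI)
      fix k assume "k \<le> Suc l" then show "\<bar>(\<Sum>i\<le>k. coeff p (Suc l - i)) - B\<bar> \<le> Ob"
        using h[rule_format, of k] by (simp add: min_def)
    qed
  next
    assume h: "\<forall>k\<le>Suc l. \<bar>(\<Sum>i\<le>k. coeff p (Suc l - i)) - B\<bar> \<le> Ob"
    show "\<forall>k. \<bar>(\<Sum>i\<le>min k (Suc l). coeff p (Suc l - i)) - B\<bar> \<le> Ob"
      using h by simp
  qed
  finally show ?thesis .
qed

lemma rf_mult: "rf (a * b) = rf a * rf b" by (simp add: rf_def)
lemma rf_add: "rf (a + b) = rf a + rf b" by (simp add: rf_def)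
lemma rf_1: "rf 1 = 1" by (simp add: rf_def One_fract_def)
lemma rf_0_iff: "rf a = 0 \<longleftrightarrow> a = 0" by (simp add: rf_def Zero_fract_def eq_fract)
lemma Fract_rf: "b \<noteq> 0 \<Longrightarrow> Fract a b = rf a / rf b" by (simp add: rf_def)

lemma field_Y:
  fixes a dc dp m zR zO nc ngr np ngo zl x :: "'f::field"
  assumes nz: "a \<noteq> 0" "dc \<noteq> 0" "dp \<noteq> 0" "m \<noteq> 0" "zR \<noteq> 0" "zO \<noteq> 0" "zl \<noteq> 0"
    and e: "a*dc*dp + nc*ngr*np*ngo = zl"
  shows "(m*zR*zO*nc/(a*dc)) * (ngr/zR) * (np/(m*dp)) / (1 + (m*zR*zO*nc/(a*dc))*(ngr/zR)*(np/(m*dp))*(ngo/zO)) * (x/a)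
     = (x*zO*nc*ngr*np)/(zl*a)"
    and "(m*zR*zO*nc/(a*dc)) * (ngr/zR) / (1 + (m*zR*zO*nc/(a*dc))*(ngr/zR)*(np/(m*dp))*(ngo/zO)) * (x/a)
     = (x*zO*m*nc*ngr*dp)/(zl*a)"
proof -
  have L: "1 + (m*zR*zO*nc/(a*dc))*(ngr/zR)*(np/(m*dp))*(ngo/zO) = zl/(a*dc*dp)"
    using nz e[symmetric] by (simp add: field_simps)
  show "(m*zR*zO*nc/(a*dc)) * (ngr/zR) * (np/(m*dp)) / (1 + (m*zR*zO*nc/(a*dc))*(ngr/zR)*(np/(m*dp))*(ngo/zO)) * (x/a)
     = (x*zO*nc*ngr*np)/(zl*a)"
    unfolding L using nz by (simp add: field_simps)
  show "(m*zR*zO*nc/(a*dc)) * (ngr/zR) / (1 + (m*zR*zO*nc/(a*dc))*(ngr/zR)*(np/(m*dp))*(ngo/zO)) * (x/a)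
     = (x*zO*m*nc*ngr*dp)/(zl*a)"
    unfolding L using nz by (simp add: field_simps)
qed

lemma netnum_PP: "(\<lambda>v. netnum E u w dl (\<lambda>e. v (Inr e))) \<in> PP"
  unfolding netnum_def gam_def pweight_def
  by (intro PP_sum PP_monom pf_sum pf_prod polyfun.pf_var)

lemma netnum_deg: "degree (netnum E u w dl W) \<le> maxdelay E u w dl"
proof (cases "finite (delays E u w dl)")
  case True then show ?thesis unfolding netnum_def
    by (intro degree_sum_le) (auto intro: order.trans[OF degree_monom_le])
next
  case False then show ?thesis unfolding netnum_def by simp
qed



theorem proposition3:
  fixes NP M DP' :: "real poly"
    and n r m s :: nat
    and VR :: "'a set" and ER :: "('a \<times> 'a) set" and vc vu :: 'a and dR :: "'a list \<Rightarrow> nat"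
    and VO :: "'b set" and EO :: "('b \<times> 'b) set" and vo vy :: 'b and dO :: "'b list \<Rightarrow> nat"
    and A Oy_bar Ou_bar :: real
  assumes NP_deg: "degree NP \<le> n - 1"
    and M_monic: "lead_coeff M = 1"
    and DP_monic: "lead_coeff DP' = 1" and DP_deg: "degree DP' = r"
    and n_eq: "r + degree M = n"
    and VR_fin: "finite VR" and ER_sub: "ER \<subseteq> VR \<times> VR" and ER_acyc: "acyclic ER"
    and vc_in: "vc \<in> VR" and vu_in: "vu \<in> VR"
    and VO_fin: "finite VO" and EO_sub: "EO \<subseteq> VO \<times> VO" and EO_acyc: "acyclic EO"
    and vo_in: "vo \<in> VO" and vy_in: "vy \<in> VO"
    and m_eq: "m + 1 = s + degree M + maxdelay ER vc vu dR + maxdelay EO vo vy dO"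
    and Oy_nonneg: "0 \<le> Oy_bar" and Ou_nonneg: "0 \<le> Ou_bar"
  shows
    "(\<exists>ps :: ((nat + ('a \<times> 'a) \<Rightarrow> real) \<Rightarrow> real) set.
        finite ps \<and> ps \<subseteq> polyfun \<and>
        (\<forall>(Dc :: real poly) (NC :: real poly) (wR :: 'a \<times> 'a \<Rightarrow> real) (wO :: 'b \<times> 'b \<Rightarrow> real).
           lead_coeff Dc = 1 \<and> degree Dc = m \<and> degree NC \<le> s \<and>
           [:-1, 1:] * Dc * DP' + NC * netnum ER vc vu dR wR * NP * netnum EO vo vy dO wO
             = monom 1 (m + r + 1)
           \<longrightarrow>
           (overshoot_y
              (Yz (ctrlC M (maxdelay ER vc vu dR) (maxdelay EO vo vy dO) NC Dc)
                  (netG ER vc vu dR wR) (plantP NP M DP') (netG EO vo vy dO wO) (stepR A)) A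
              \<le> ereal Oy_bar
            \<longleftrightarrow> (\<forall>p\<in>ps. 0 \<le> p (\<lambda>v. case v of Inl j \<Rightarrow> coeff NC j | Inr e \<Rightarrow> wR e)))))
   \<and> (\<exists>ps :: ((nat + ('a \<times> 'a) \<Rightarrow> real) \<Rightarrow> real) set.
        finite ps \<and> ps \<subseteq> polyfun \<and>
        (\<forall>(Dc :: real poly) (NC :: real poly) (wR :: 'a \<times> 'a \<Rightarrow> real) (wO :: 'b \<times> 'b \<Rightarrow> real).
           lead_coeff Dc = 1 \<and> degree Dc = m \<and> degree NC \<le> s \<and>
           [:-1, 1:] * Dc * DP' + NC * netnum ER vc vu dR wR * NP * netnum EO vo vy dO wO
             = monom 1 (m + r + 1)
           \<longrightarrow>
           (overshoot_u
              (Uz (ctrlC M (maxdelay ER vc vu dR) (maxdelay EO vo vy dO) NC Dc)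
                  (netG ER vc vu dR wR) (plantP NP M DP') (netG EO vo vy dO wO) (stepR A))
              \<le> ereal Ou_bar
            \<longleftrightarrow> (\<forall>p\<in>ps. 0 \<le> p (\<lambda>v. case v of Inl j \<Rightarrow> coeff NC j | Inr e \<Rightarrow> wR e)))))"
proof -
  define DR where "DR = maxdelay ER vc vu dR"
  define DO where "DO = maxdelay EO vo vy dO"
  define l where "l = m + r + 1"
  define NCv :: "(nat + ('a \<times> 'a) \<Rightarrow> real) \<Rightarrow> real poly" where
    "NCv v = (\<Sum>j\<le>s. monom (v (Inl j)) j)" for v
  define NGRv :: "(nat + ('a \<times> 'a) \<Rightarrow> real) \<Rightarrow> real poly" where
    "NGRv v = netnum ER vc vu dR (\<lambda>e. v (Inr e))" for v
  define PY where "PY v = [:0,A:] * monom 1 DO * NCv v * NGRv v * NP" for v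
  define PU where "PU v = [:0,A:] * monom 1 DO * M * NCv v * NGRv v * DP'" for v
  have NCv_PP: "NCv \<in> PP" unfolding NCv_def[abs_def]
    by (intro PP_sum PP_monom polyfun.pf_var)
  have NGRv_PP: "NGRv \<in> PP"
  proof -
    have "NGRv = (\<lambda>v. netnum ER vc vu dR (\<lambda>e. v (Inr e)))" by (simp add: fun_eq_iff NGRv_def)
    then show ?thesis using netnum_PP[of ER vc vu dR] by simp
  qed
  have PY_PP: "PY \<in> PP" unfolding PY_def[abs_def]
    by (intro PP_mult PP_const NCv_PP NGRv_PP)
  have PU_PP: "PU \<in> PP" unfolding PU_def[abs_def]
    by (intro PP_mult PP_const NCv_PP NGRv_PP)
  obtain psY where psY: "finite psY" "psY \<subseteq> polyfun"
    "\<And>v. (\<forall>k\<le>Suc l. \<bar>(\<Sum>i\<le>k. coeff (PY v) (Suc l - i)) - A\<bar> \<le> Oy_bar) \<longleftrightarrow> (\<forall>p\<in>psY. 0 \<le> p v)"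
    using ps_exists[OF PY_PP, of "Suc l" A Oy_bar] by blast
  obtain psU where psU: "finite psU" "psU \<subseteq> polyfun"
    "\<And>v. (\<forall>k\<le>Suc l. \<bar>(\<Sum>i\<le>k. coeff (PU v) (Suc l - i)) - 0\<bar> \<le> Ou_bar) \<longleftrightarrow> (\<forall>p\<in>psU. 0 \<le> p v)"
    using ps_exists[OF PU_PP, of "Suc l" 0 Ou_bar] by blast
  have d5: "degree (p1*p2*p3*p4*p5) \<le> degree p1 + degree p2 + degree p3 + degree p4 + degree p5"
    for p1 p2 p3 p4 p5 :: "real poly"
    using degree_mult_le[of "p1*p2*p3*p4" p5] degree_mult_le[of "p1*p2*p3" p4]
      degree_mult_le[of "p1*p2" p3] degree_mult_le[of p1 p2] by linarith
  have d6: "degree (p1*p2*p3*p4*p5*p6) \<le> degree p1 + degree p2 + degree p3 + degree p4 + degree p5 + degree p6"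
    for p1 p2 p3 p4 p5 p6 :: "real poly"
    using d5[of p1 p2 p3 p4 p5] degree_mult_le[of "p1*p2*p3*p4*p5" p6] by linarith
  have dA: "degree [:0,A:] \<le> 1" by simp
  have dO: "degree (monom (1::real) DO) \<le> DO" by (rule degree_monom_le)
  {
    fix Dc NC :: "real poly" and wR :: "'a \<times> 'a \<Rightarrow> real" and wO :: "'b \<times> 'b \<Rightarrow> real"
    assume h: "lead_coeff Dc = 1 \<and> degree Dc = m \<and> degree NC \<le> s \<and>
           [:-1, 1:] * Dc * DP' + NC * netnum ER vc vu dR wR * NP * netnum EO vo vy dO wO
             = monom 1 (m + r + 1)"
    define v0 where "v0 = (\<lambda>v. case v of Inl j \<Rightarrow> coeff NC j | Inr e \<Rightarrow> wR e)"
    have NCv0: "NCv v0 = NC" unfolding NCv_def v0_def using h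
      by (simp add: poly_as_sum_of_monoms')
    have NGRv0: "NGRv v0 = netnum ER vc vu dR wR" unfolding NGRv_def v0_def by simp
    have nz: "rf [:-1,1:] \<noteq> 0" "rf Dc \<noteq> 0" "rf DP' \<noteq> 0" "rf M \<noteq> 0" "rf (monom 1 DR) \<noteq> 0"
      "rf (monom 1 DO) \<noteq> 0" "rf (monom 1 l) \<noteq> 0"
      using h M_monic DP_monic by (auto simp: rf_0_iff)
    have e: "rf [:-1,1:] * rf Dc * rf DP' + rf NC * rf (netnum ER vc vu dR wR) * rf NP * rf (netnum EO vo vy dO wO)
       = rf (monom 1 l)"
      using arg_cong[OF conjunct2[OF conjunct2[OF conjunct2[OF h]]], of rf]
      by (simp only: rf_mult rf_add l_def)
    have q0: "monom 1 l * [:-1,1:] \<noteq> (0::real poly)"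
      by (rule no_zero_divisors) (simp_all add: monom_eq_0_iff)
    note key = field_Y[of "rf [:-1,1:]" "rf Dc" "rf DP'" "rf M" "rf (monom 1 DR)" "rf (monom 1 DO)"
        "rf (monom 1 l)" "rf NC" "rf (netnum ER vc vu dR wR)" "rf NP" "rf (netnum EO vo vy dO wO)"
        "rf [:0,A:]"]
    have Yeq: "Yz (ctrlC M DR DO NC Dc) (netG ER vc vu dR wR) (plantP NP M DP') (netG EO vo vy dO wO) (stepR A)
        = Fract (PY v0) (monom 1 l * [:-1,1:])"
      unfolding Fract_rf[OF q0] PY_def NCv0 NGRv0 Yz_def ctrlC_def netG_def plantP_def stepR_def rf_mult
        DR_def[symmetric] DO_def[symmetric]
      using key(1)[OF nz e] by (simp add: ac_simps)
    have Ueq: "Uz (ctrlC M DR DO NC Dc) (netG ER vc vu dR wR) (plantP NP M DP') (netG EO vo vy dO wO) (stepR A)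
        = Fract (PU v0) (monom 1 l * [:-1,1:])"
      unfolding Fract_rf[OF q0] PU_def NCv0 NGRv0 Uz_def ctrlC_def netG_def plantP_def stepR_def rf_mult
        DR_def[symmetric] DO_def[symmetric]
      using key(2)[OF nz e] by (simp add: ac_simps)
    have dNGR: "degree (netnum ER vc vu dR wR) \<le> DR" unfolding DR_def by (rule netnum_deg)
    have degY: "degree (PY v0) \<le> Suc l"
      unfolding PY_def NCv0 NGRv0
      using d5[of "[:0,A:]" "monom 1 DO" NC "netnum ER vc vu dR wR" NP] dA dO h dNGR NP_deg n_eq m_eq
      unfolding l_def DR_def DO_def by linarith
    have degU: "degree (PU v0) \<le> Suc l"
      unfolding PU_def NCv0 NGRv0
      using d6[of "[:0,A:]" "monom 1 DO" M NC "netnum ER vc vu dR wR" DP'] dA dO h dNGR DP_deg m_eq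
      unfolding l_def DR_def DO_def by linarith
    have "overshoot_y (Yz (ctrlC M DR DO NC Dc) (netG ER vc vu dR wR) (plantP NP M DP') (netG EO vo vy dO wO) (stepR A)) A
        \<le> ereal Oy_bar \<longleftrightarrow> (\<forall>p\<in>psY. 0 \<le> p v0)"
      unfolding overshoot_y_def Yeq overshoot_char[OF degY] psY(3) ..
    moreover
    have "overshoot_u (Uz (ctrlC M DR DO NC Dc) (netG ER vc vu dR wR) (plantP NP M DP') (netG EO vo vy dO wO) (stepR A))
        \<le> ereal Ou_bar \<longleftrightarrow> (\<forall>p\<in>psU. 0 \<le> p v0)"
    proof -
      have "overshoot_u (Uz (ctrlC M DR DO NC Dc) (netG ER vc vu dR wR) (plantP NP M DP') (netG EO vo vy dO wO) (stepR A))
        = (SUP k. ereal \<bar>inv_ztrans (Fract (PU v0) (monom 1 l * [:-1,1:])) k - 0\<bar>)"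
        unfolding overshoot_u_def Ueq by simp
      then show ?thesis using overshoot_char[OF degU, of 0 Ou_bar] psU(3) by simp
    qed
    ultimately have
      "(overshoot_y (Yz (ctrlC M DR DO NC Dc) (netG ER vc vu dR wR) (plantP NP M DP') (netG EO vo vy dO wO) (stepR A)) A
        \<le> ereal Oy_bar \<longleftrightarrow> (\<forall>p\<in>psY. 0 \<le> p (\<lambda>v. case v of Inl j \<Rightarrow> coeff NC j | Inr e \<Rightarrow> wR e)))
       \<and> (overshoot_u (Uz (ctrlC M DR DO NC Dc) (netG ER vc vu dR wR) (plantP NP M DP') (netG EO vo vy dO wO) (stepR A))
        \<le> ereal Ou_bar \<longleftrightarrow> (\<forall>p\<in>psU. 0 \<le> p (\<lambda>v. case v of Inl j \<Rightarrow> coeff NC j | Inr e \<Rightarrow> wR e)))"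
      unfolding v0_def by blast
  }
  note main = this
  show ?thesis
    unfolding DR_def[symmetric] DO_def[symmetric]
    apply (intro conjI)
     apply (rule exI[of _ psY], intro conjI psY(1) psY(2) allI impI)
     apply (rule conjunct1[OF main], assumption)
    apply (rule exI[of _ psU], intro conjI psU(1) psU(2) allI impI)
    apply (rule conjunct2[OF main], assumption)
    done
qed


end
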